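(* Let $G$ be a group generated by $x_1,\dots,x_n$, with finite commutator subgroup $C=[G,G]$, such that $G/C$ is free abelian of rank $n$ with basis the images of $x_1,\dots,x_n$. Let $P=X\cap\mathcal C_G(C)$ with $X=\{g_{\mathbf m}\in T: c_{\,x_1^{m_1}\cdots x_{k-1}^{m_{k-1}},\,x_k}=e \text{ for all } k\}$, and $Q=P\cap Z$ with $Z$ the center of $G$. Then $l_{\mathbf r,q}=e$ for every $\mathbf r\in\mathbb Z^n$ and every $q\in Q$.
   Context: Notation: $\bar g=g^{-1}$, $c_{gh}=\bar g\,\bar h\,g\,h$; $\mathcal C_G(C)$ is the centralizer of $C$ in $G$. For $\mathbf r\in\mathbb Z^n$, $g_{\mathbf r}=x_1^{r_1}\cdots x_n^{r_n}$, $T=\{g_{\mathbf r}\}$. Every $g\in G$ decomposes uniquely as $g=g_{\mathbf r}c$ with $c\in C$; write $\mathbf r_g=\mathbf r$. The link is $l_{\mathbf r,\lambda}=\overline{g_{\mathbf r+\mathbf r_\lambda}}\,\lambda\,g_{\mathbf r}\in C$. *)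

theory Defs
  imports "HOL-Algebra.Algebra"
begin

text \<open>Ordered product x_0^(r 0) * ... * x_(m-1)^(r (m-1)) (0-based indices).\<close>
primrec gprod :: "('a, 'b) monoid_scheme \<Rightarrow> (nat \<Rightarrow> 'a) \<Rightarrow> (nat \<Rightarrow> int) \<Rightarrow> nat \<Rightarrow> 'a" where
  "gprod G x r 0 = \<one>\<^bsub>G\<^esub>"
| "gprod G x r (Suc m) = gprod G x r m \<otimes>\<^bsub>G\<^esub> (x m [^]\<^bsub>G\<^esub> r m)"

definition comm :: "('a, 'b) monoid_scheme \<Rightarrow> 'a \<Rightarrow> 'a \<Rightarrow> 'a" where
  "comm G g h = inv\<^bsub>G\<^esub> g \<otimes>\<^bsub>G\<^esub> inv\<^bsub>G\<^esub> h \<otimes>\<^bsub>G\<^esub> g \<otimes>\<^bsub>G\<^esub> h"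

definition centralizer :: "('a, 'b) monoid_scheme \<Rightarrow> 'a set \<Rightarrow> 'a set" where
  "centralizer G S = {g \<in> carrier G. \<forall>s\<in>S. g \<otimes>\<^bsub>G\<^esub> s = s \<otimes>\<^bsub>G\<^esub> g}"

definition center :: "('a, 'b) monoid_scheme \<Rightarrow> 'a set" where
  "center G = centralizer G (carrier G)"

text \<open>Exponent vectors in Z^n: functions nat => int vanishing from index n on.\<close>
definition expvecs :: "nat \<Rightarrow> (nat \<Rightarrow> int) set" where
  "expvecs n = {r. \<forall>i\<ge>n. r i = 0}"

definition rvec :: "('a, 'b) monoid_scheme \<Rightarrow> (nat \<Rightarrow> 'a) \<Rightarrow> nat \<Rightarrow> 'a \<Rightarrow> (nat \<Rightarrow> int)" where
  "rvec G x n g = (THE r. r \<in> expvecs n \<and>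
      inv\<^bsub>G\<^esub> (gprod G x r n) \<otimes>\<^bsub>G\<^esub> g \<in> derived G (carrier G))"

definition Xset :: "('a, 'b) monoid_scheme \<Rightarrow> (nat \<Rightarrow> 'a) \<Rightarrow> nat \<Rightarrow> 'a set" where
  "Xset G x n = {gprod G x m n | m. m \<in> expvecs n \<and>
      (\<forall>k<n. comm G (gprod G x m k) (x k) = \<one>\<^bsub>G\<^esub>)}"

definition link :: "('a, 'b) monoid_scheme \<Rightarrow> (nat \<Rightarrow> 'a) \<Rightarrow> nat \<Rightarrow> (nat \<Rightarrow> int) \<Rightarrow> 'a \<Rightarrow> 'a" where
  "link G x n r l = inv\<^bsub>G\<^esub> (gprod G x (\<lambda>i. r i + rvec G x n l i) n) \<otimes>\<^bsub>G\<^esub> l \<otimes>\<^bsub>G\<^esub> gprod G x r n"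

end

theory Submission
  imports Defs
begin

lemma (in group) inv_commutes:
  assumes c: "a \<otimes> y = y \<otimes> a" and "a \<in> carrier G" "y \<in> carrier G"
  shows "inv a \<otimes> y = y \<otimes> inv a"
proof -
  have "inv a \<otimes> y = inv a \<otimes> (y \<otimes> a) \<otimes> inv a" using assms by (simp add: m_assoc)
  also have "\<dots> = inv a \<otimes> (a \<otimes> y) \<otimes> inv a" using c by simp
  also have "\<dots> = y \<otimes> inv a" using assms by (metis l_inv l_one m_assoc inv_closed)
  finally show ?thesis .
qed

lemma (in group) int_pow_commutes:
  assumes "x \<otimes> y = y \<otimes> x" "x \<in> carrier G" "y \<in> carrier G"
  shows "x [^] (i::int) \<otimes> y = y \<otimes> x [^] i"
proof (cases i rule: int_cases)
  case (nonneg n)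
  then show ?thesis using group_commutes_pow[OF assms] by (simp add: int_pow_int)
next
  case (neg n)
  have c: "x [^] Suc n \<otimes> y = y \<otimes> x [^] Suc n" by (rule group_commutes_pow[OF assms])
  have calc: "inv (x [^] Suc n) \<otimes> y = y \<otimes> inv (x [^] Suc n)"
    by (rule inv_commutes[OF c nat_pow_closed[OF assms(2)] assms(3)])
  show ?thesis unfolding neg int_pow_neg_int[OF assms(2)] by (rule calc)
qed

lemma gprod_closed:
  assumes "group G" "\<forall>i<n. x i \<in> carrier G" "k \<le> n"
  shows "gprod G x r k \<in> carrier G"
  using assms(3) by (induct k) (auto intro!: group.int_pow_closed assms(1) monoid.m_closed group.is_monoid simp: assms(2))

lemma gprod_comm_add:
  assumes "comm_group H" "\<forall>i<k. y i \<in> carrier H"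
  shows "gprod H y (\<lambda>i. a i + b i) k = gprod H y a k \<otimes>\<^bsub>H\<^esub> gprod H y b k"
  using assms(2)
proof (induct k)
  case 0
  then show ?case using assms(1) by (simp add: comm_group_def group.is_monoid)
next
  case (Suc k)
  interpret comm_group H by fact
  have cl: "gprod H y c k \<in> carrier H" for c
    by (rule gprod_closed[OF is_group, where n=k]) (use Suc.prems in auto)
  have yk: "y k \<in> carrier H" using Suc.prems by simp
  show ?case using Suc cl yk by (simp add: int_pow_mult m_ac)
qed

lemma gprod_comm_neg:
  assumes "comm_group H" "\<forall>i<k. y i \<in> carrier H"
  shows "gprod H y (\<lambda>i. - a i) k = inv\<^bsub>H\<^esub> gprod H y a k"
  using assms(2)
proof (induct k)
  case 0
  then show ?case using assms(1) by (simp add: comm_group_def monoid.inv_one group.is_monoid)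
next
  case (Suc k)
  interpret comm_group H by fact
  have cl: "gprod H y c k \<in> carrier H" for c
    by (rule gprod_closed[OF is_group, where n=k]) (use Suc.prems in auto)
  have yk: "y k \<in> carrier H" using Suc.prems by simp
  show ?case using Suc cl yk by (simp add: int_pow_neg inv_mult)
qed

lemma gprod_hom:
  assumes "group G" "group H" "h \<in> hom G H" "\<forall>i<n. x i \<in> carrier G" "k \<le> n"
  shows "h (gprod G x s k) = gprod H (\<lambda>i. h (x i)) s k"
  using assms(5)
proof (induct k)
  case 0
  then show ?case using assms by (simp add: group_hom.hom_one group_hom_def group_hom_axioms_def)
next
  case (Suc k)
  have cl: "gprod G x s k \<in> carrier G" using gprod_closed[OF assms(1,4)] Suc.prems by simp
  have xk: "x k \<in> carrier G" using Suc.prems assms(4) by simp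
  show ?case using Suc cl xk assms
    by (simp add: hom_mult hom_int_pow group.int_pow_closed)
qed

lemma gprod_mult_X:
  fixes G (structure)
  assumes "group G" "\<forall>i<n. x i \<in> carrier G" "k \<le> n"
    and "\<forall>j<n. comm G (gprod G x m j) (x j) = \<one>\<^bsub>G\<^esub>"
  shows "gprod G x r k \<otimes>\<^bsub>G\<^esub> gprod G x m k = gprod G x (\<lambda>i. r i + m i) k"
  using assms(3)
proof (induct k)
  case 0
  then show ?case using assms by (simp add: group.is_monoid monoid.l_one)
next
  case (Suc k)
  interpret group G by fact
  have cl: "gprod G x c k \<in> carrier G" for c using gprod_closed[OF assms(1,2)] Suc.prems by simp
  have xk: "x k \<in> carrier G" using Suc.prems assms(2) by simp
  have cm: "comm G (gprod G x m k) (x k) = \<one>" using assms(4) Suc.prems by simp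
  have sw: "gprod G x m k \<otimes> x k = x k \<otimes> gprod G x m k"
  proof -
    let ?a = "gprod G x m k"
    have "inv ?a \<otimes> inv (x k) \<otimes> ?a \<otimes> x k = \<one>" using cm by (simp add: comm_def)
    hence "inv (x k \<otimes> ?a) \<otimes> (?a \<otimes> x k) = \<one>"
      using cl xk by (simp add: inv_mult_group m_assoc)
    thus ?thesis using cl xk
      by (metis inv_closed inv_equality m_closed inv_inv) 
  qed
  have sw2: "x k [^] r k \<otimes> gprod G x m k = gprod G x m k \<otimes> x k [^] r k"
    using int_pow_commutes[OF sw[symmetric] xk cl] by simp
  have "gprod G x r (Suc k) \<otimes> gprod G x m (Suc k)
      = gprod G x r k \<otimes> (x k [^] r k \<otimes> gprod G x m k) \<otimes> x k [^] m k"
    using cl xk by (simp add: m_assoc)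
  also have "\<dots> = (gprod G x r k \<otimes> gprod G x m k) \<otimes> (x k [^] r k \<otimes> x k [^] m k)"
    using cl xk by (simp add: sw2 m_assoc)
  also have "\<dots> = gprod G x (\<lambda>i. r i + m i) (Suc k)"
    using Suc cl xk by (simp add: int_pow_mult)
  finally show ?case .
qed

theorem corollary6p2:
  fixes G (structure) and x :: "nat \<Rightarrow> 'a" and n :: nat
  assumes "group G"
    and "\<forall>i<n. x i \<in> carrier G"
    and "generate G (x ` {..<n}) = carrier G"
    and "finite (derived G (carrier G))"
    and "\<forall>r \<in> expvecs n. gprod G x r n \<in> derived G (carrier G) \<longrightarrow> (\<forall>i<n. r i = 0)"
  shows "\<forall>r \<in> expvecs n. \<forall>q \<in> Xset G x n \<inter> centralizer G (derived G (carrier G)) \<inter> center G.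
           link G x n r q = \<one>"
proof (intro ballI)
  interpret group G by fact
  define C where "C = derived G (carrier G)"
  have nC: "C \<lhd> G" unfolding C_def by (rule derived_self_is_normal)
  have sC: "subgroup C G" using nC normal_imp_subgroup by blast
  define H where "H = G Mod C"
  have cH: "comm_group H" unfolding H_def C_def by (rule derived_quot_is_comm_group)
  hence gH: "group H" by (simp add: comm_group_def)
  define h where "h = (\<lambda>a. C #> a)"
  have hh: "h \<in> hom G H" unfolding h_def H_def using nC normal.r_coset_hom_Mod by blast
  have cl: "gprod G x c n \<in> carrier G" for c using gprod_closed[OF assms(1,2)] by simp
  have ycl: "\<forall>i<n. h (x i) \<in> carrier H" using hh assms(2) by (auto simp: hom_def)
  have ker: "a \<in> C" if "a \<in> carrier G" "h a = \<one>\<^bsub>H\<^esub>" for a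
    using that rcos_self[OF that(1) sC] by (simp add: h_def H_def)
  have uniq: "r' = m" if "r' \<in> expvecs n" "m \<in> expvecs n"
      "inv (gprod G x r' n) \<otimes> gprod G x m n \<in> C" for r' m
  proof -
    let ?a = "gprod G x r' n" and ?b = "gprod G x m n"
    let ?y = "\<lambda>i. h (x i)"
    have "h (inv ?a \<otimes> ?b) = \<one>\<^bsub>H\<^esub>"
      using that(3) sC by (simp add: h_def H_def subgroup.rcos_const[OF sC is_group])
    hence e: "inv\<^bsub>H\<^esub> (h ?a) \<otimes>\<^bsub>H\<^esub> h ?b = \<one>\<^bsub>H\<^esub>"
      using hh cl gH by (simp add: hom_mult group_hom.hom_inv group_hom_def group_hom_axioms_def is_group)
    define d where "d = (\<lambda>i. - r' i + m i)"
    have "h (gprod G x d n) = gprod H ?y d n"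
      using gprod_hom[OF assms(1) gH hh assms(2)] by simp
    also have "\<dots> = inv\<^bsub>H\<^esub> (gprod H ?y r' n) \<otimes>\<^bsub>H\<^esub> gprod H ?y m n"
      unfolding d_def using gprod_comm_add[OF cH ycl, of "\<lambda>i. - r' i" m] gprod_comm_neg[OF cH ycl, of r'] by simp
    also have "\<dots> = \<one>\<^bsub>H\<^esub>" using e gprod_hom[OF assms(1) gH hh assms(2)] by simp
    finally have "gprod G x d n \<in> C" using ker cl by blast
    moreover have "d \<in> expvecs n" using that unfolding d_def expvecs_def by simp
    ultimately have "\<forall>i<n. d i = 0" using assms(5) C_def by blast
    show ?thesis
    proof (rule ext)
      fix i show "r' i = m i"
        using \<open>\<forall>i<n. d i = 0\<close> that(1,2) unfolding d_def expvecs_def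
        by (cases "i < n") auto
    qed
  qed
  fix r q
  assume r: "r \<in> expvecs n" and q: "q \<in> Xset G x n \<inter> centralizer G (derived G (carrier G)) \<inter> center G"
  then obtain m where m: "m \<in> expvecs n" "\<forall>k<n. comm G (gprod G x m k) (x k) = \<one>"
    and qm: "q = gprod G x m n" unfolding Xset_def by blast
  have qc: "\<forall>g\<in>carrier G. q \<otimes> g = g \<otimes> q" using q unfolding center_def centralizer_def by blast
  have rv: "rvec G x n q = m"
    unfolding rvec_def C_def[symmetric]
  proof (rule the_equality)
    show "m \<in> expvecs n \<and> inv gprod G x m n \<otimes> q \<in> C"
      using m qm cl sC by (simp add: subgroup.one_closed)
  next
    fix r' assume "r' \<in> expvecs n \<and> inv gprod G x r' n \<otimes> q \<in> C"
    thus "r' = m" using uniq m qm by blast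
  qed
  have "link G x n r q = inv (gprod G x (\<lambda>i. r i + m i) n) \<otimes> (gprod G x r n \<otimes> q)"
    unfolding link_def rv using qc cl qm by (simp add: m_assoc)
  also have "\<dots> = \<one>"
  proof -
    have eq: "gprod G x r n \<otimes> q = gprod G x (\<lambda>i. r i + m i) n"
      using gprod_mult_X[OF assms(1,2) order.refl m(2)] qm by simp
    show ?thesis unfolding eq using cl by simp
  qed
  finally show "link G x n r q = \<one>" .
qed

end
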